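(* In the maximum-weight online bipartite left-perfect matching problem with general nonnegative weights under vertex arrivals with a hard budget $k=4$ on the number of reassignments per arrival (defined in the context), the most-profitable-augmenting-path algorithm described in the context is $\frac12$-competitive: on every instance, the weight of the final left-perfect matching it outputs is at least $\frac12$ times the maximum weight of a left-perfect matching in $G$.
   Context: Problem: $G=(L\cup R,E)$ is a complete bipartite graph with $|L|\le|R|$ and edge weights $w:E\to\mathbb{Q}_{\ge 0}$ (no triangle inequality is assumed). The algorithm initially knows $R$ (and $k=4$). Over $|L|$ timesteps the vertices of $L$ arrive one at a time, together with all incident edges and their weights. At the end of each timestep the algorithm must output a left-perfect matching of the revealed graph, i.e., a matching in which every arrived vertex of $L$ is matched. The new matching $M_2$ must be obtainable from the previous one $M_1$ (empty before the first timestep) by at most $k$ (re)assignments, the number of (re)assignments being the number of vertices of nonzero degree in $M_1\triangle M_2$; once a vertex is matched it must remain matched afterwards. The weight of a matching is the sum of the weights of its edges. An augmenting path with respect to a matching $M$ is a path between two distinct vertices not covered by $M$ whose edges alternate between non-$M$ and $M$ edges; its profit is the weight of $M\triangle P$ minus the weight of $M$. Algorithm: when a vertex $u$ arrives, among all augmenting paths with respect to the current matching that contain $u$ and have at most $k$ vertices (i.e., length at most $3$), choose one $P$ of maximum profit and output $M\triangle P$. *)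

theory Defs
  imports Complex_Main
begin

text \<open>Vertices of L have type 'l, vertices of R have type 'r; a vertex of the
  bipartite graph is an element of the sum type.  An edge {l,r} (l in L, r in R)
  is represented by the pair (l, r).\<close>

type_synonym ('l, 'r) vtx = "'l + 'r"

definition is_matching :: "('l \<times> 'r) set \<Rightarrow> bool" where
  "is_matching M \<longleftrightarrow>
     (\<forall>l r l' r'. (l, r) \<in> M \<longrightarrow> (l', r') \<in> M \<longrightarrow> (l = l' \<longleftrightarrow> r = r'))"

definition left_perfect :: "'l set \<Rightarrow> 'r set \<Rightarrow> ('l \<times> 'r) set \<Rightarrow> bool" where
  "left_perfect A R M \<longleftrightarrow> is_matching M \<and> M \<subseteq> A \<times> R \<and> (\<forall>l\<in>A. \<exists>r. (l, r) \<in> M)"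

definition mweight :: "('l \<Rightarrow> 'r \<Rightarrow> rat) \<Rightarrow> ('l \<times> 'r) set \<Rightarrow> rat" where
  "mweight w M = (\<Sum>(l, r)\<in>M. w l r)"

definition covered :: "('l \<times> 'r) set \<Rightarrow> ('l, 'r) vtx \<Rightarrow> bool" where
  "covered M v = (case v of Inl l \<Rightarrow> (\<exists>r. (l, r) \<in> M) | Inr r \<Rightarrow> (\<exists>l. (l, r) \<in> M))"

fun edge_of :: "('l, 'r) vtx \<Rightarrow> ('l, 'r) vtx \<Rightarrow> ('l \<times> 'r) set" where
  "edge_of (Inl l) (Inr r) = {(l, r)}"
| "edge_of (Inr r) (Inl l) = {(l, r)}"
| "edge_of _ _ = {}"

fun opposite :: "('l, 'r) vtx \<Rightarrow> ('l, 'r) vtx \<Rightarrow> bool" where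
  "opposite (Inl _) (Inr _) = True"
| "opposite (Inr _) (Inl _) = True"
| "opposite _ _ = False"

definition path_edge :: "('l, 'r) vtx list \<Rightarrow> nat \<Rightarrow> 'l \<times> 'r" where
  "path_edge p i = (THE e. e \<in> edge_of (p ! i) (p ! Suc i))"

definition path_edges :: "('l, 'r) vtx list \<Rightarrow> ('l \<times> 'r) set" where
  "path_edges p = (\<Union>i\<in>{i. Suc i < length p}. edge_of (p ! i) (p ! Suc i))"

definition augmenting_path ::
  "'l set \<Rightarrow> 'r set \<Rightarrow> ('l \<times> 'r) set \<Rightarrow> ('l, 'r) vtx list \<Rightarrow> bool" where
  "augmenting_path A R M p \<longleftrightarrow>
     length p \<ge> 2 \<and> distinct p \<and>
     set p \<subseteq> Inl ` A \<union> Inr ` R \<and>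
     (\<forall>i. Suc i < length p \<longrightarrow> opposite (p ! i) (p ! Suc i)) \<and>
     \<not> covered M (hd p) \<and> \<not> covered M (last p) \<and>
     (\<forall>i. i + 2 < length p \<longrightarrow>
        (path_edge p i \<in> M \<longleftrightarrow> path_edge p (Suc i) \<notin> M))"

definition profit :: "('l \<Rightarrow> 'r \<Rightarrow> rat) \<Rightarrow> ('l \<times> 'r) set \<Rightarrow> ('l, 'r) vtx list \<Rightarrow> rat" where
  "profit w M p = mweight w (M - path_edges p \<union> (path_edges p - M)) - mweight w M"

definition kbudget :: nat where "kbudget = 4"

text \<open>One step of the algorithm: vertex u arrives, A is the set of previously arrived
  left vertices, M the current matching, M' the new one.  Ties are broken arbitrarily.\<close>
definition alg_step ::
  "('l \<Rightarrow> 'r \<Rightarrow> rat) \<Rightarrow> 'r set \<Rightarrow> 'l set \<Rightarrow> 'l \<Rightarrow> ('l \<times> 'r) set \<Rightarrow> ('l \<times> 'r) set \<Rightarrow> bool" where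
  "alg_step w R A u M M' \<longleftrightarrow>
     (\<exists>P. augmenting_path (insert u A) R M P \<and> Inl u \<in> set P \<and> length P \<le> kbudget \<and>
        (\<forall>Q. augmenting_path (insert u A) R M Q \<and> Inl u \<in> set Q \<and> length Q \<le> kbudget
              \<longrightarrow> profit w M Q \<le> profit w M P) \<and>
        M' = M - path_edges P \<union> (path_edges P - M))"

text \<open>A run of the algorithm on arrival order \<sigma>: Ms i is the matching after i arrivals.\<close>
definition alg_run ::
  "('l \<Rightarrow> 'r \<Rightarrow> rat) \<Rightarrow> 'r set \<Rightarrow> 'l list \<Rightarrow> (nat \<Rightarrow> ('l \<times> 'r) set) \<Rightarrow> bool" where
  "alg_run w R \<sigma> Ms \<longleftrightarrow> Ms 0 = {} \<and>
     (\<forall>i < length \<sigma>. alg_step w R (set (take i \<sigma>)) (\<sigma> ! i) (Ms i) (Ms (Suc i)))"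

end

theory Submission
  imports Defs
begin


definition free :: "('l \<times> 'r) set \<Rightarrow> 'r \<Rightarrow> bool" where
  "free M r \<longleftrightarrow> \<not> (\<exists>l. (l, r) \<in> M)"

lemma path_edge_simps[simp]:
  "path_edge p i = (THE e. e \<in> edge_of (p ! i) (p ! Suc i))"
  by (simp add: path_edge_def)

lemma len2: "length P = 2 \<Longrightarrow> \<exists>a b. P = [a,b]"
  by (auto simp: length_Suc_conv numeral_eq_Suc)
lemma len3: "length P = 3 \<Longrightarrow> \<exists>a b c. P = [a,b,c]"
  by (auto simp: length_Suc_conv numeral_eq_Suc)
lemma len4: "length P = 4 \<Longrightarrow> \<exists>a b c d. P = [a,b,c,d]"
  by (auto simp: length_Suc_conv numeral_eq_Suc)

lemma path_edges2: "path_edges [a,b] = edge_of a b"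
proof -
  have "{i. Suc i < length [a,b]} = {0}" by auto
  then show ?thesis unfolding path_edges_def by simp
qed
lemma path_edges4: "path_edges [a,b,c,d] = edge_of a b \<union> edge_of b c \<union> edge_of c d"
proof -
  have "{i. Suc i < length [a,b,c,d]} = {0,1,2}" by auto
  then show ?thesis unfolding path_edges_def by (simp add: numeral_2_eq_2 Un_assoc)
qed

lemma pe_LR[simp]: "(THE e. e \<in> edge_of (Inl x) (Inr y)) = (x, y)"
  by simp
lemma pe_RL[simp]: "(THE e. e \<in> edge_of (Inr y) (Inl x)) = (x, y)"
  by simp

lemma aug_cases:
  assumes ap: "augmenting_path B R M P" and uP: "Inl u \<in> set P" and lP: "length P \<le> 4"
    and uf: "\<not> (\<exists>r. (u, r) \<in> M)"
  shows "(\<exists>r. r \<in> R \<and> free M r \<and> path_edges P = {(u, r)}) \<or>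
         (\<exists>l' s f. (l', s) \<in> M \<and> f \<in> R \<and> free M f \<and> path_edges P = {(u, s), (l', s), (l', f)})"
proof -
  have L: "length P \<ge> 2" and D: "distinct P" and S: "set P \<subseteq> Inl ` B \<union> Inr ` R"
    and O: "\<And>i. Suc i < length P \<Longrightarrow> opposite (P ! i) (P ! Suc i)"
    and H: "\<not> covered M (hd P)" and T: "\<not> covered M (last P)"
    and A: "\<And>i. i + 2 < length P \<Longrightarrow> (path_edge P i \<in> M \<longleftrightarrow> path_edge P (Suc i) \<notin> M)"
    using ap unfolding augmenting_path_def by auto
  have "length P = 2 \<or> length P = 3 \<or> length P = 4" using L lP by auto
  moreover
  { assume "length P = 2"
    then obtain a b where P: "P = [a,b]" using len2 by blast
    have o1: "opposite a b" using O[of 0] P by simp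
    have ?thesis
    proof (cases a)
      case (Inl x)
      then obtain y where b: "b = Inr y" using o1 by (cases b) auto
      have "x = u" using uP P Inl b by auto
      then show ?thesis using S T P Inl b by (auto simp: path_edges2 free_def covered_def)
    next
      case (Inr y)
      then obtain x where b: "b = Inl x" using o1 by (cases b) auto
      have "x = u" using uP P Inr b by auto
      then show ?thesis using S H P Inr b by (auto simp: path_edges2 free_def covered_def)
    qed }
  moreover
  { assume "length P = 3"
    then obtain a b c where P: "P = [a,b,c]" using len3 by blast
    have o1: "opposite a b" using O[of 0] P by simp
    have o2: "opposite b c" using O[of 1] P by simp
    have a0: "path_edge P 0 \<in> M \<longleftrightarrow> path_edge P 1 \<notin> M" using A[of 0] P by simp
    have ?thesis
    proof (cases a)
      case (Inl x)
      then obtain y where b: "b = Inr y" using o1 by (cases b) auto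
      then obtain z where c: "c = Inl z" using o2 by (cases c) auto
      show ?thesis using a0 H T P Inl b c by (auto simp: covered_def)
    next
      case (Inr x)
      then obtain y where b: "b = Inl y" using o1 by (cases b) auto
      then obtain z where c: "c = Inr z" using o2 by (cases c) auto
      show ?thesis using a0 H T P Inr b c by (auto simp: covered_def)
    qed }
  moreover
  { assume "length P = 4"
    then obtain a b c d where P: "P = [a,b,c,d]" using len4 by blast
    have o1: "opposite a b" using O[of 0] P by simp
    have o2: "opposite b c" using O[of 1] P by simp
    have o3: "opposite c d" using O[of 2] P by (simp add: numeral_2_eq_2)
    have a0: "path_edge P 0 \<in> M \<longleftrightarrow> path_edge P 1 \<notin> M" using A[of 0] P by simp
    have ?thesis
    proof (cases a)
      case (Inl x)
      then obtain y where b: "b = Inr y" using o1 by (cases b) auto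
      then obtain z where c: "c = Inl z" using o2 by (cases c) auto
      then obtain v where d: "d = Inr v" using o3 by (cases d) auto
      have xy: "(x, y) \<notin> M" using H P Inl by (auto simp: covered_def)
      have zy: "(z, y) \<in> M" using a0 xy P Inl b c by simp
      have "u = x" using uP P Inl b c d zy uf by auto
      moreover have "free M v" "v \<in> R" using T S P d by (auto simp: covered_def free_def)
      ultimately show ?thesis using zy P Inl b c d by (auto simp: path_edges4)
    next
      case (Inr v)
      then obtain z where b: "b = Inl z" using o1 by (cases b) auto
      then obtain y where c: "c = Inr y" using o2 by (cases c) auto
      then obtain x where d: "d = Inl x" using o3 by (cases d) auto
      have xy: "(z, v) \<notin> M" using H P Inr b by (auto simp: covered_def)
      have zy: "(z, y) \<in> M" using a0 xy P Inr b c by simp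
      have "u = x" using uP P Inr b c d zy uf by auto
      moreover have "free M v" "v \<in> R" using H S P Inr by (auto simp: covered_def free_def)
      ultimately show ?thesis using zy P Inr b c d by (auto simp: path_edges4)
    qed }
  ultimately show ?thesis by blast
qed


lemma finite_path_edges: "finite (path_edges p)"
proof -
  have "finite (edge_of a b)" for a b :: "('a,'b) vtx"
    by (cases a; cases b) auto
  then show ?thesis unfolding path_edges_def
    apply (intro finite_UN_I)
     apply (rule finite_subset[of _ "{..<length p}"])
    by auto
qed

lemma mweight_sym:
  assumes "finite M" "finite E"
  shows "mweight w (M - E \<union> (E - M)) = mweight w M - mweight w (M \<inter> E) + mweight w (E - M)"
proof -
  have "mweight w (M - E \<union> (E - M)) = mweight w (M - E) + mweight w (E - M)"
    unfolding mweight_def using assms by (intro sum.union_disjoint) auto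
  moreover have "mweight w M = mweight w (M - E) + mweight w (M \<inter> E)"
    unfolding mweight_def using assms
    by (metis Diff_Diff_Int Diff_subset add.commute sum.subset_diff)
  ultimately show ?thesis by simp
qed

lemma profit_eq:
  assumes "finite M"
  shows "profit w M P = mweight w (path_edges P - M) - mweight w (M \<inter> path_edges P)"
  unfolding profit_def using mweight_sym[OF assms finite_path_edges] by simp

lemma Q1:
  assumes uf: "\<not> (\<exists>r. (u, r) \<in> M)" and "u \<in> B" "f \<in> R" "free M f"
  shows "augmenting_path B R M [Inl u, Inr f]" "path_edges [Inl u, Inr f] = {(u, f)}"
  using assms unfolding augmenting_path_def
  by (auto simp: path_edges2 covered_def free_def less_Suc_eq)

lemma Q2:
  assumes uf: "\<not> (\<exists>r. (u, r) \<in> M)" and "u \<in> B" "f \<in> R" "free M f" "(l, s) \<in> M" "l \<in> B" "s \<in> R"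
  shows "augmenting_path B R M [Inl u, Inr s, Inl l, Inr f]"
    "path_edges [Inl u, Inr s, Inl l, Inr f] = {(u, s), (l, s), (l, f)}"
proof -
  let ?P = "[Inl u, Inr s, Inl l, Inr f]"
  have ne: "u \<noteq> l" "s \<noteq> f" using assms by (auto simp: free_def)
  have o: "opposite (?P ! i) (?P ! Suc i)" if "Suc i < length ?P" for i
  proof -
    have "i = 0 \<or> i = 1 \<or> i = 2" using that by auto
    then show ?thesis by (auto simp: numeral_2_eq_2)
  qed
  have a: "path_edge ?P i \<in> M \<longleftrightarrow> path_edge ?P (Suc i) \<notin> M" if "i + 2 < length ?P" for i
  proof -
    have "i = 0 \<or> i = 1" using that by auto
    then show ?thesis using assms by (auto simp: numeral_2_eq_2 free_def)
  qed
  have d: "distinct ?P" using ne by simp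
  show "augmenting_path B R M ?P"
    unfolding augmenting_path_def using o a d assms
    by (simp add: covered_def free_def)
  show "path_edges [Inl u, Inr s, Inl l, Inr f] = {(u, s), (l, s), (l, f)}"
    by (auto simp: path_edges4)
qed


lemma profit1:
  assumes "finite M" "\<not> (\<exists>r. (u, r) \<in> M)" "path_edges P = {(u, f)}"
  shows "profit w M P = w u f"
proof -
  have "path_edges P - M = {(u, f)}" "M \<inter> path_edges P = {}" using assms by auto
  then show ?thesis using profit_eq[OF assms(1)] by (simp add: mweight_def)
qed

lemma profit2:
  assumes "finite M" "\<not> (\<exists>r. (u, r) \<in> M)" "(l, s) \<in> M" "free M f"
    "path_edges P = {(u, s), (l, s), (l, f)}"
  shows "profit w M P = w u s - w l s + w l f"
proof -
  have ne: "u \<noteq> l" "s \<noteq> f" using assms by (auto simp: free_def)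
  have "path_edges P - M = {(u, s), (l, f)}" "M \<inter> path_edges P = {(l, s)}"
    using assms by (auto simp: free_def)
  then show ?thesis using profit_eq[OF assms(1)] ne by (simp add: mweight_def)
qed

lemma step_info:
  assumes st: "alg_step w R A u M M'" and fin: "finite M" and sub: "M \<subseteq> A \<times> R" and uA: "u \<notin> A"
  shows "(\<forall>f\<in>R. free M f \<longrightarrow> w u f \<le> mweight w M' - mweight w M) \<and>
    (\<forall>l s f. (l, s) \<in> M \<longrightarrow> f \<in> R \<longrightarrow> free M f \<longrightarrow> w u s - w l s + w l f \<le> mweight w M' - mweight w M) \<and>
    ((\<exists>f0\<in>R. free M f0 \<and> M' = insert (u, f0) M) \<or>
     (\<exists>l' s f0. (l', s) \<in> M \<and> f0 \<in> R \<and> free M f0 \<and> M' = M - {(l', s)} \<union> {(u, s), (l', f0)} \<and>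
        mweight w M' - mweight w M = w u s - w l' s + w l' f0))"
proof -
  obtain P where ap: "augmenting_path (insert u A) R M P" and uP: "Inl u \<in> set P"
    and lP: "length P \<le> kbudget"
    and opt: "\<And>Q. augmenting_path (insert u A) R M Q \<Longrightarrow> Inl u \<in> set Q \<Longrightarrow> length Q \<le> kbudget
              \<Longrightarrow> profit w M Q \<le> profit w M P"
    and M': "M' = M - path_edges P \<union> (path_edges P - M)"
    using st unfolding alg_step_def by blast
  have uf: "\<not> (\<exists>r. (u, r) \<in> M)" using sub uA by auto
  have g: "mweight w M' - mweight w M = profit w M P" unfolding M' profit_def by simp
  have c1: "w u f \<le> mweight w M' - mweight w M" if "f \<in> R" "free M f" for f
  proof -
    have "augmenting_path (insert u A) R M [Inl u, Inr f]" "path_edges [Inl u, Inr f] = {(u, f)}"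
      using Q1[OF uf _ that, of "insert u A"] by auto
    then show ?thesis using opt[of "[Inl u, Inr f]"] profit1[OF fin uf] g by (simp add: kbudget_def)
  qed
  have c2: "w u s - w l s + w l f \<le> mweight w M' - mweight w M"
    if "(l, s) \<in> M" "f \<in> R" "free M f" for l s f
  proof -
    have "l \<in> A" "s \<in> R" using that sub by auto
    then have "augmenting_path (insert u A) R M [Inl u, Inr s, Inl l, Inr f]"
      "path_edges [Inl u, Inr s, Inl l, Inr f] = {(u, s), (l, s), (l, f)}"
      using Q2[OF uf _ that(2,3,1), of "insert u A"] by auto
    then show ?thesis using opt[of "[Inl u, Inr s, Inl l, Inr f]"] profit2[OF fin uf that(1,3)] g
      by (simp add: kbudget_def)
  qed
  have "(\<exists>r. r \<in> R \<and> free M r \<and> path_edges P = {(u, r)}) \<or>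
         (\<exists>l' s f. (l', s) \<in> M \<and> f \<in> R \<and> free M f \<and> path_edges P = {(u, s), (l', s), (l', f)})"
    using aug_cases[OF ap uP _ uf] lP by (simp add: kbudget_def)
  then have c3: "(\<exists>f0\<in>R. free M f0 \<and> M' = insert (u, f0) M) \<or>
     (\<exists>l' s f0. (l', s) \<in> M \<and> f0 \<in> R \<and> free M f0 \<and> M' = M - {(l', s)} \<union> {(u, s), (l', f0)} \<and>
        mweight w M' - mweight w M = w u s - w l' s + w l' f0)"
  proof
    assume "\<exists>r. r \<in> R \<and> free M r \<and> path_edges P = {(u, r)}"
    then obtain r where r: "r \<in> R" "free M r" "path_edges P = {(u, r)}" by blast
    then have "M' = insert (u, r) M" using M' uf by auto
    then show ?thesis using r by blast
  next
    assume "\<exists>l' s f. (l', s) \<in> M \<and> f \<in> R \<and> free M f \<and> path_edges P = {(u, s), (l', s), (l', f)}"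
    then obtain l' s f where r: "(l', s) \<in> M" "f \<in> R" "free M f" "path_edges P = {(u, s), (l', s), (l', f)}"
      by blast
    have "M' = M - {(l', s)} \<union> {(u, s), (l', f)}" using M' uf r by (auto simp: free_def)
    moreover have "mweight w M' - mweight w M = w u s - w l' s + w l' f"
      using g profit2[OF fin uf r(1,3,4)] by simp
    ultimately show ?thesis using r by blast
  qed
  show ?thesis using c1 c2 c3 by blast
qed



lemma free_exists:
  assumes m: "is_matching M" and sub: "M \<subseteq> A \<times> R" and fA: "finite A" and fR: "finite R"
    and c: "card A < card R"
  shows "\<exists>f\<in>R. free M f"
proof -
  have fM: "finite M" using sub fA fR by (meson finite_SigmaI finite_subset)
  have inj: "inj_on fst M" using m unfolding is_matching_def inj_on_def by auto
  have "card (snd ` M) \<le> card M" using fM card_image_le by blast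
  also have "card M = card (fst ` M)" using inj card_image by metis
  also have "\<dots> \<le> card A" using sub fA by (intro card_mono) auto
  finally have "card (snd ` M) < card R" using c by simp
  moreover have "snd ` M \<subseteq> R" using sub by auto
  ultimately have "\<exists>f\<in>R. f \<notin> snd ` M"
  proof -
    assume a: "card (snd ` M) < card R" "snd ` M \<subseteq> R"
    show ?thesis
    proof (rule ccontr)
      assume "\<not> ?thesis"
      then have "R = snd ` M" using a by auto
      then show False using a by simp
    qed
  qed
  then show ?thesis unfolding free_def by force
qed

definition stepok where
  "stepok w R u M M' \<longleftrightarrow>
   (\<forall>f\<in>R. free M f \<longrightarrow> w u f \<le> mweight w M' - mweight w M) \<and>
    (\<forall>l s f. (l, s) \<in> M \<longrightarrow> f \<in> R \<longrightarrow> free M f \<longrightarrow> w u s - w l s + w l f \<le> mweight w M' - mweight w M) \<and>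
    ((\<exists>f0\<in>R. free M f0 \<and> M' = insert (u, f0) M) \<or>
     (\<exists>l' s f0. (l', s) \<in> M \<and> f0 \<in> R \<and> free M f0 \<and> M' = M - {(l', s)} \<union> {(u, s), (l', f0)} \<and>
        mweight w M' - mweight w M = w u s - w l' s + w l' f0))"

lemma take_facts:
  assumes d: "distinct \<sigma>" and t: "t < length \<sigma>"
  shows "\<sigma> ! t \<notin> set (take t \<sigma>)" "set (take (Suc t) \<sigma>) = insert (\<sigma> ! t) (set (take t \<sigma>))"
    "card (set (take t \<sigma>)) = t"
proof -
  show "\<sigma> ! t \<notin> set (take t \<sigma>)"
  proof
    assume "\<sigma> ! t \<in> set (take t \<sigma>)"
    then obtain i where i: "i < length (take t \<sigma>)" "take t \<sigma> ! i = \<sigma> ! t" by (metis in_set_conv_nth)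
    then have "i < t" "\<sigma> ! i = \<sigma> ! t" by auto
    then show False using d t nth_eq_iff_index_eq by fastforce
  qed
  show "set (take (Suc t) \<sigma>) = insert (\<sigma> ! t) (set (take t \<sigma>))"
    using t by (simp add: take_Suc_conv_app_nth)
  show "card (set (take t \<sigma>)) = t"
    using d t by (simp add: distinct_card)
qed

lemma step_preserves:
  assumes m: "is_matching M" and sub: "M \<subseteq> A \<times> R" and cov: "\<forall>l\<in>A. \<exists>r. (l, r) \<in> M"
    and uA: "u \<notin> A" and so: "stepok w R u M M'"
  shows "is_matching M' \<and> M' \<subseteq> insert u A \<times> R \<and> (\<forall>l\<in>insert u A. \<exists>r. (l, r) \<in> M')"
proof -
  have uf: "\<And>r. (u, r) \<notin> M" using sub uA by auto
  from so have "(\<exists>f0\<in>R. free M f0 \<and> M' = insert (u, f0) M) \<or>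
     (\<exists>l' s f0. (l', s) \<in> M \<and> f0 \<in> R \<and> free M f0 \<and> M' = M - {(l', s)} \<union> {(u, s), (l', f0)})"
    unfolding stepok_def by blast
  then show ?thesis
  proof
    assume "\<exists>f0\<in>R. free M f0 \<and> M' = insert (u, f0) M"
    then obtain f0 where f0: "f0 \<in> R" "free M f0" "M' = insert (u, f0) M" by blast
    have "is_matching M'" using m uf f0 unfolding is_matching_def free_def by auto
    then show ?thesis using f0 sub cov by auto
  next
    assume "\<exists>l' s f0. (l', s) \<in> M \<and> f0 \<in> R \<and> free M f0 \<and> M' = M - {(l', s)} \<union> {(u, s), (l', f0)}"
    then obtain l' s f0 where f0: "(l', s) \<in> M" "f0 \<in> R" "free M f0" "M' = M - {(l', s)} \<union> {(u, s), (l', f0)}"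
      by blast
    have "is_matching M'" using m uf f0 unfolding is_matching_def free_def
      by (smt (verit) Diff_iff Un_iff insert_iff prod.inject singletonD)
    moreover have "M' \<subseteq> insert u A \<times> R" using f0 sub by auto
    moreover have "\<forall>l\<in>insert u A. \<exists>r. (l, r) \<in> M'"
    proof
      fix l assume "l \<in> insert u A"
      then show "\<exists>r. (l, r) \<in> M'"
      proof
        assume "l = u" then show ?thesis using f0 by auto
      next
        assume "l \<in> A"
        then obtain r where "(l, r) \<in> M" using cov by blast
        then show ?thesis using f0 by (cases "l = l'") auto
      qed
    qed
    ultimately show ?thesis by blast
  qed
qed

lemma run_inv:
  assumes fR: "finite R" and d: "distinct \<sigma>" and run: "alg_run w R \<sigma> Ms"
  shows "t \<le> length \<sigma> \<Longrightarrow> is_matching (Ms t) \<and> Ms t \<subseteq> set (take t \<sigma>) \<times> R \<and>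
          (\<forall>l\<in>set (take t \<sigma>). \<exists>r. (l, r) \<in> Ms t)"
proof (induction t)
  case 0
  then show ?case using run by (simp add: alg_run_def is_matching_def)
next
  case (Suc t)
  then have t: "t < length \<sigma>" by simp
  with Suc.IH have I: "is_matching (Ms t)" "Ms t \<subseteq> set (take t \<sigma>) \<times> R"
     "\<forall>l\<in>set (take t \<sigma>). \<exists>r. (l, r) \<in> Ms t" by auto
  have fin: "finite (Ms t)" using I(2) fR by (meson finite_SigmaI finite_set finite_subset)
  have st: "alg_step w R (set (take t \<sigma>)) (\<sigma> ! t) (Ms t) (Ms (Suc t))"
    using run t unfolding alg_run_def by blast
  have so: "stepok w R (\<sigma> ! t) (Ms t) (Ms (Suc t))"
    unfolding stepok_def using step_info[OF st fin I(2) take_facts(1)[OF d t]] by blast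
  show ?case using step_preserves[OF I take_facts(1)[OF d t] so] take_facts(2)[OF d t] by simp
qed

lemma run_step:
  assumes fR: "finite R" and d: "distinct \<sigma>" and run: "alg_run w R \<sigma> Ms" and t: "t < length \<sigma>"
  shows "stepok w R (\<sigma> ! t) (Ms t) (Ms (Suc t))"
proof -
  have I: "is_matching (Ms t)" "Ms t \<subseteq> set (take t \<sigma>) \<times> R"
    using run_inv[OF fR d run, of t] t by auto
  have fin: "finite (Ms t)" using I(2) fR by (meson finite_SigmaI finite_set finite_subset)
  have st: "alg_step w R (set (take t \<sigma>)) (\<sigma> ! t) (Ms t) (Ms (Suc t))"
    using run t unfolding alg_run_def by blast
  show ?thesis
    unfolding stepok_def using step_info[OF st fin I(2) take_facts(1)[OF d t]] by blast
qed



definition Pinv where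
  "Pinv w R M r c \<longleftrightarrow> (\<exists>l. (l, r) \<in> M \<and> c \<le> w l r \<and> (\<forall>f\<in>R. free M f \<longrightarrow> c \<le> w l r - w l f))"

lemma pinv_step:
  assumes so: "stepok w R u M M'" and nn: "\<forall>l r. 0 \<le> w l r" and P: "Pinv w R M r c"
  shows "Pinv w R M' r c"
proof -
  obtain l where l: "(l, r) \<in> M" "c \<le> w l r" "\<forall>f\<in>R. free M f \<longrightarrow> c \<le> w l r - w l f"
    using P unfolding Pinv_def by blast
  from so have c1: "\<forall>f\<in>R. free M f \<longrightarrow> w u f \<le> mweight w M' - mweight w M"
    unfolding stepok_def by blast
  from so have "(\<exists>f0\<in>R. free M f0 \<and> M' = insert (u, f0) M) \<or>
     (\<exists>l' s f0. (l', s) \<in> M \<and> f0 \<in> R \<and> free M f0 \<and> M' = M - {(l', s)} \<union> {(u, s), (l', f0)} \<and>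
        mweight w M' - mweight w M = w u s - w l' s + w l' f0)"
    unfolding stepok_def by blast
  then show ?thesis
  proof
    assume "\<exists>f0\<in>R. free M f0 \<and> M' = insert (u, f0) M"
    then obtain f0 where f0: "M' = insert (u, f0) M" by blast
    have "free M' f \<Longrightarrow> free M f" for f using f0 by (auto simp: free_def)
    then show ?thesis unfolding Pinv_def using l f0 by blast
  next
    assume "\<exists>l' s f0. (l', s) \<in> M \<and> f0 \<in> R \<and> free M f0 \<and> M' = M - {(l', s)} \<union> {(u, s), (l', f0)} \<and>
        mweight w M' - mweight w M = w u s - w l' s + w l' f0"
    then obtain l' s f0 where f0: "(l', s) \<in> M" "f0 \<in> R" "free M f0" "M' = M - {(l', s)} \<union> {(u, s), (l', f0)}"
      "mweight w M' - mweight w M = w u s - w l' s + w l' f0" by blast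
    have fr: "free M' f \<Longrightarrow> free M f" for f using f0 by (auto simp: free_def)
    show ?thesis
    proof (cases "(l, r) = (l', s)")
      case False
      then have "(l, r) \<in> M'" using f0 l by auto
      then show ?thesis unfolding Pinv_def using l fr by blast
    next
      case True
      then have eq: "l = l'" "r = s" by auto
      have cc: "c \<le> w l' s - w l' f0" using l f0 eq by auto
      have A: "c \<le> w u s - w u f" if "f \<in> R" "free M f" for f
        using c1 that f0(5) cc by fastforce
      have "(u, r) \<in> M'" using f0 eq by auto
      moreover have "c \<le> w u r"
      proof -
        have "0 \<le> w u f0" using nn by blast
        then show ?thesis using A[OF f0(2,3)] eq by simp
      qed
      moreover have "\<forall>f\<in>R. free M' f \<longrightarrow> c \<le> w u r - w u f" using A fr eq by blast
      ultimately show ?thesis unfolding Pinv_def by blast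
    qed
  qed
qed

lemma pinv_prop:
  assumes fR: "finite R" and d: "distinct \<sigma>" and run: "alg_run w R \<sigma> Ms" and nn: "\<forall>l r. 0 \<le> w l r"
  shows "t \<le> j \<Longrightarrow> j \<le> length \<sigma> \<Longrightarrow> Pinv w R (Ms t) r c \<Longrightarrow> Pinv w R (Ms j) r c"
proof (induction j)
  case 0
  then show ?case by simp
next
  case (Suc j)
  show ?case
  proof (cases "t = Suc j")
    case True then show ?thesis using Suc by simp
  next
    case False
    then have "Pinv w R (Ms j) r c" using Suc by simp
    then show ?thesis using pinv_step[OF run_step[OF fR d run] nn] Suc by simp
  qed
qed



theorem theorem3:
  fixes w :: "'l \<Rightarrow> 'r \<Rightarrow> rat" and R :: "'r set" and \<sigma> :: "'l list"
    and Ms :: "nat \<Rightarrow> ('l \<times> 'r) set" and Mopt :: "('l \<times> 'r) set"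
  assumes "finite R"
    and "distinct \<sigma>"
    and "card (set \<sigma>) \<le> card R"
    and "\<forall>l r. 0 \<le> w l r"
    and "alg_run w R \<sigma> Ms"
    and "left_perfect (set \<sigma>) R Mopt"
  shows "mweight w (Ms (length \<sigma>)) \<ge> (1/2) * mweight w Mopt"
proof -
  note fR = assms(1) and d = assms(2) and cR = assms(3) and nn = assms(4) and run = assms(5)
    and lp = assms(6)
  define n where "n = length \<sigma>"
  define MT where "MT = Ms n"
  define g where "g t = mweight w (Ms (Suc t)) - mweight w (Ms t)" for t
  define mT where "mT q = (\<Sum>e\<in>{e \<in> MT. snd e = q}. case_prod w e)" for q
  have IT: "is_matching MT" "MT \<subseteq> set \<sigma> \<times> R"
    using run_inv[OF fR d run, of n] unfolding MT_def n_def by auto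
  have finMT: "finite MT" using IT(2) fR by (meson finite_SigmaI finite_set finite_subset)
  have mT_nn: "0 \<le> mT q" for q unfolding mT_def using nn by (intro sum_nonneg) auto
  have pfin: "c \<le> mT q" if P: "Pinv w R MT q c" for q c
  proof -
    obtain l where l: "(l, q) \<in> MT" "c \<le> w l q" using P unfolding Pinv_def by blast
    have "{e \<in> MT. snd e = q} = {(l, q)}" using l IT(1) unfolding is_matching_def by auto
    then show ?thesis using l unfolding mT_def by simp
  qed
  have bound: "w (\<sigma> ! t) q \<le> g t + mT q" if t: "t < n" and q: "q \<in> R" for t q
  proof -
    let ?u = "\<sigma> ! t" and ?M = "Ms t"
    have tn: "t < length \<sigma>" using t n_def by simp
    have so: "stepok w R ?u ?M (Ms (Suc t))" using run_step[OF fR d run tn] .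
    have I: "is_matching ?M" "?M \<subseteq> set (take t \<sigma>) \<times> R" using run_inv[OF fR d run, of t] tn by auto
    have "card (set (take t \<sigma>)) < card R"
      using take_facts(3)[OF d tn] tn cR distinct_card[OF d] by simp
    then obtain f0 where f0: "f0 \<in> R" "free ?M f0" using free_exists[OF I] fR by blast
    have c1: "\<forall>f\<in>R. free ?M f \<longrightarrow> w ?u f \<le> g t" using so unfolding stepok_def g_def by blast
    have c2: "\<forall>l s f. (l, s) \<in> ?M \<longrightarrow> f \<in> R \<longrightarrow> free ?M f \<longrightarrow> w ?u s - w l s + w l f \<le> g t"
      using so unfolding stepok_def g_def by blast
    show ?thesis
    proof (cases "free ?M q")
      case True
      then show ?thesis using c1 q mT_nn[of q] by fastforce
    next
      case False
      then obtain l where l: "(l, q) \<in> ?M" unfolding free_def by blast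
      have "w ?u q - g t \<le> w l q"
      proof -
        have "w ?u q - w l q + w l f0 \<le> g t" using c2 l f0 by blast
        moreover have "0 \<le> w l f0" using nn by blast
        ultimately show ?thesis by simp
      qed
      moreover have "\<forall>f\<in>R. free ?M f \<longrightarrow> w ?u q - g t \<le> w l q - w l f"
      proof (intro ballI impI)
        fix f assume "f \<in> R" "free ?M f"
        then have "w ?u q - w l q + w l f \<le> g t" using c2 l by blast
        then show "w ?u q - g t \<le> w l q - w l f" by simp
      qed
      ultimately have "Pinv w R ?M q (w ?u q - g t)" unfolding Pinv_def using l by blast
      then have "Pinv w R MT q (w ?u q - g t)"
        using pinv_prop[OF fR d run nn, of t n] t unfolding MT_def n_def by simp
      then show ?thesis using pfin by fastforce
    qed
  qed
  have WT: "mweight w MT = (\<Sum>t<n. g t)"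
  proof -
    have "(\<Sum>t<n. g t) = mweight w (Ms n) - mweight w (Ms 0)"
      unfolding g_def by (rule sum_lessThan_telescope)
    moreover have "Ms 0 = {}" using run unfolding alg_run_def by simp
    ultimately show ?thesis unfolding MT_def by (simp add: mweight_def)
  qed
  define G where "G l = g (the_inv_into {..<n} ((!) \<sigma>) l)" for l
  have injn: "inj_on ((!) \<sigma>) {..<n}" using d unfolding n_def by (simp add: inj_on_nth)
  have imn: "(!) \<sigma> ` {..<n} = set \<sigma>" unfolding n_def by (auto simp: set_conv_nth)
  have Gt: "G (\<sigma> ! t) = g t" if "t < n" for t
    unfolding G_def using the_inv_into_f_f[OF injn] that by simp
  have injf: "inj_on fst Mopt" and injs: "inj_on snd Mopt"
    using lp unfolding left_perfect_def is_matching_def inj_on_def by auto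
  have fst_im: "fst ` Mopt = set \<sigma>" using lp unfolding left_perfect_def by force
  have snd_sub: "snd ` Mopt \<subseteq> R" using lp unfolding left_perfect_def by auto
  have finopt: "finite Mopt" using lp fR unfolding left_perfect_def
    by (meson finite_SigmaI finite_set finite_subset)
  have e_bound: "case_prod w e \<le> G (fst e) + mT (snd e)" if "e \<in> Mopt" for e
  proof -
    obtain l q where e: "e = (l, q)" by (cases e)
    have "l \<in> set \<sigma>" "q \<in> R" using that e lp unfolding left_perfect_def by auto
    then obtain t where "t < n" "l = \<sigma> ! t" using imn by auto
    then show ?thesis using bound[of t q] Gt[of t] e \<open>q \<in> R\<close> by simp
  qed
  have "mweight w Mopt \<le> (\<Sum>e\<in>Mopt. G (fst e) + mT (snd e))"
    unfolding mweight_def using e_bound by (intro sum_mono) auto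
  also have "\<dots> = (\<Sum>e\<in>Mopt. G (fst e)) + (\<Sum>e\<in>Mopt. mT (snd e))" by (rule sum.distrib)
  also have "(\<Sum>e\<in>Mopt. G (fst e)) = (\<Sum>t<n. g t)"
  proof -
    have "(\<Sum>e\<in>Mopt. G (fst e)) = (\<Sum>l\<in>fst ` Mopt. G l)" using sum.reindex[OF injf, of G] by simp
    also have "\<dots> = (\<Sum>l\<in>(!) \<sigma> ` {..<n}. G l)" using fst_im imn by simp
    also have "\<dots> = (\<Sum>t<n. G (\<sigma> ! t))" using sum.reindex[OF injn, of G] by simp
    also have "\<dots> = (\<Sum>t<n. g t)" using Gt by simp
    finally show ?thesis .
  qed
  also have "(\<Sum>e\<in>Mopt. mT (snd e)) \<le> mweight w MT"
  proof -
    have "(\<Sum>e\<in>Mopt. mT (snd e)) = (\<Sum>q\<in>snd ` Mopt. mT q)" using sum.reindex[OF injs, of mT] by simp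
    also have "\<dots> \<le> (\<Sum>q\<in>R. mT q)" using snd_sub fR mT_nn by (intro sum_mono2) auto
    also have "\<dots> = (\<Sum>e\<in>MT. case_prod w e)" unfolding mT_def
      using IT(2) finMT fR by (intro sum.group) auto
    also have "\<dots> = mweight w MT" unfolding mweight_def by simp
    finally show ?thesis .
  qed
  finally have "mweight w Mopt \<le> 2 * mweight w MT" using WT by simp
  then show ?thesis unfolding MT_def n_def by simp
qed


end
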